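(* Let $X$ be a finite $T_0$ topological space, $\mathcal V$ a multivector field on $X$ with $X$ invariant, and $\mathcal M=\{M_p\mid p\in\mathbb P\}$ a Morse predecomposition of $X$. If the strongly connected components of the digraph $G_{\mathcal M}$ form a partition $\mathcal Q$ of $\mathbb P$, then $\mathcal M':=\{M_Q\mid Q\in\mathcal Q\}$ is a Morse decomposition of $X$.
   Context: Notation: $\operatorname{cl}$ is closure; $A\subset X$ is locally closed if $\operatorname{cl}A\setminus A$ is closed. A multivector field $\mathcal V$ on $X$ is a partition of $X$ into locally closed sets (multivectors); $[x]_{\mathcal V}$ is the multivector containing $x$. A multivector $V$ is critical if $H(\operatorname{cl}V,\operatorname{cl}V\setminus V)$ (relative singular homology) is nontrivial, regular otherwise. $A$ is $\mathcal V$-compatible if it is a union of multivectors; $\langle A\rangle_{\mathcal V}$ is the smallest locally closed $\mathcal V$-compatible set containing $A$. $\Pi_{\mathcal V}(x)=\operatorname{cl}\{x\}\cup[x]_{\mathcal V}$. A solution is a partial map $\gamma:\mathbb Z\nrightarrow X$ with domain an integer interval and $\gamma(t+1)\in\Pi_{\mathcal V}(\gamma(t))$; a path has finite domain; a full solution has domain $\mathbb Z$. $\alpha(\gamma)=\langle\bigcap_{t\le0}\gamma((-\infty,t])\rangle_{\mathcal V}$, $\omega(\gamma)=\langle\bigcap_{t\ge0}\gamma([t,\infty))\rangle_{\mathcal V}$. A full solution is essential unless $\alpha(\gamma)$ or $\omega(\gamma)$ lies in a single regular multivector; an essential solution in $A$ has image in $A$. $\operatorname{Inv}S$ is the set of $x\in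 S$ with an essential solution $\gamma$ in $S$, $\gamma(0)=x$; $S$ is invariant if $\operatorname{Inv}S=S$. An invariant $S$ is isolated invariant if there is a closed $N\supset\Pi_{\mathcal V}(S)$ such that every path in $N$ with endpoints in $S$ has image in $S$. A link from $S_1$ to $S_2$ is a full solution $\gamma$ with $\alpha(\gamma)\cap S_1\ne\emptyset\ne\omega(\gamma)\cap S_2$; a link from $M_p$ to $M_q$ is trivial if $p=q$ and $\operatorname{im}\gamma\subset M_p$, non-trivial otherwise. A Morse predecomposition of $X$ is an indexed family $\{M_p\mid p\in\mathbb P\}$ of mutually disjoint isolated invariant subsets such that every essential solution in $X$ is a link from some $M_p$ to some $M_q$. $G_{\mathcal M}$ is the digraph with vertex set $\mathbb P$ and an edge $p\to q$ iff there is a non-trivial link from $M_p$ to $M_q$. A vertex set $A$ is strongly connected if for all $v,w\in A$ there is a walk of positive length from $v$ to $w$ inside $A$; a strongly connected component is an inclusion-maximal strongly connected set. A preorder $\le$ on $\mathbb P$ is admissible if a link from $M_p$ to $M_q$ implies $q\le p$. An invariant $T$ is saturated if every essential solution $\gamma$ in $X$ with $\alpha(\gamma)\cup\omega(\gamma)\subset T$ has $\operatorname{im}\gamma\subset T$. A Morse decomposition is a Morse predecomposition all of whose members are saturated and for which some admissible preorder is a partial order (here $\mathcal M'$ is indexed by $\mathcal Q$). $\mathbb P_C=\{p\mid M_p\cap C\ne\emptyset\}$; for $Q\subset\mathbb P$, $\operatorname{eSol}_Q(X)$ is the set of essential solutions $\gamma$ in $X$ with $\mathbb P_{\alpha(\gamma)}\cap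 Q\ne\emptyset\ne\mathbb P_{\omega(\gamma)}\cap Q$, and $M_Q=\bigcup\{\operatorname{im}\gamma\mid\gamma\in\operatorname{eSol}_Q(X)\}$. *)

theory Defs
  imports "HOL-Analysis.Analysis" "HOL-Homology.Homology"
begin

definition locally_closed :: "'a topology \<Rightarrow> 'a set \<Rightarrow> bool" where
  "locally_closed X A \<longleftrightarrow> A \<subseteq> topspace X \<and> closedin X (X closure_of A - A)"

definition multivector_field :: "'a topology \<Rightarrow> 'a set set \<Rightarrow> bool" where
  "multivector_field X V \<longleftrightarrow>
     \<Union>V = topspace X \<and> {} \<notin> V \<and>
     (\<forall>A\<in>V. \<forall>B\<in>V. A \<noteq> B \<longrightarrow> A \<inter> B = {}) \<and>
     (\<forall>A\<in>V. locally_closed X A)"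

definition mv :: "'a set set \<Rightarrow> 'a \<Rightarrow> 'a set" where
  "mv V x = (THE A. A \<in> V \<and> x \<in> A)"

definition critical :: "'a topology \<Rightarrow> 'a set \<Rightarrow> bool" where
  "critical X A \<longleftrightarrow>
     (\<exists>p. \<not> trivial_group
        (relative_homology_group p (subtopology X (X closure_of A)) (X closure_of A - A)))"

definition regular :: "'a topology \<Rightarrow> 'a set \<Rightarrow> bool" where
  "regular X A \<longleftrightarrow> \<not> critical X A"

definition compatible :: "'a set set \<Rightarrow> 'a set \<Rightarrow> bool" where
  "compatible V A \<longleftrightarrow> (\<exists>W\<subseteq>V. A = \<Union>W)"

definition lc_hull :: "'a topology \<Rightarrow> 'a set set \<Rightarrow> 'a set \<Rightarrow> 'a set" where
  "lc_hull X V A = \<Inter>{B. locally_closed X B \<and> compatible V B \<and> A \<subseteq> B}"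

definition Pi_V :: "'a topology \<Rightarrow> 'a set set \<Rightarrow> 'a \<Rightarrow> 'a set" where
  "Pi_V X V x = X closure_of {x} \<union> mv V x"

definition full_solution :: "'a topology \<Rightarrow> 'a set set \<Rightarrow> (int \<Rightarrow> 'a) \<Rightarrow> bool" where
  "full_solution X V \<gamma> \<longleftrightarrow>
     (\<forall>t. \<gamma> t \<in> topspace X) \<and> (\<forall>t. \<gamma> (t + 1) \<in> Pi_V X V (\<gamma> t))"

text \<open>Paths: solutions with finite (nonempty) domain {a..b}; values outside are irrelevant.\<close>
definition is_path :: "'a topology \<Rightarrow> 'a set set \<Rightarrow> int \<Rightarrow> int \<Rightarrow> (int \<Rightarrow> 'a) \<Rightarrow> bool" where
  "is_path X V a b \<gamma> \<longleftrightarrow> a \<le> b \<and>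
     (\<forall>t\<in>{a..b}. \<gamma> t \<in> topspace X) \<and> (\<forall>t\<in>{a..<b}. \<gamma> (t + 1) \<in> Pi_V X V (\<gamma> t))"

definition alpha_lim :: "'a topology \<Rightarrow> 'a set set \<Rightarrow> (int \<Rightarrow> 'a) \<Rightarrow> 'a set" where
  "alpha_lim X V \<gamma> = lc_hull X V (\<Inter>t\<in>{..0}. \<gamma> ` {..t})"

definition omega_lim :: "'a topology \<Rightarrow> 'a set set \<Rightarrow> (int \<Rightarrow> 'a) \<Rightarrow> 'a set" where
  "omega_lim X V \<gamma> = lc_hull X V (\<Inter>t\<in>{0..}. \<gamma> ` {t..})"

definition essential :: "'a topology \<Rightarrow> 'a set set \<Rightarrow> (int \<Rightarrow> 'a) \<Rightarrow> bool" where
  "essential X V \<gamma> \<longleftrightarrow> full_solution X V \<gamma> \<and>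
     \<not> ((\<exists>B\<in>V. regular X B \<and> alpha_lim X V \<gamma> \<subseteq> B) \<or>
        (\<exists>B\<in>V. regular X B \<and> omega_lim X V \<gamma> \<subseteq> B))"

definition essential_in :: "'a topology \<Rightarrow> 'a set set \<Rightarrow> 'a set \<Rightarrow> (int \<Rightarrow> 'a) \<Rightarrow> bool" where
  "essential_in X V A \<gamma> \<longleftrightarrow> essential X V \<gamma> \<and> range \<gamma> \<subseteq> A"

definition Inv :: "'a topology \<Rightarrow> 'a set set \<Rightarrow> 'a set \<Rightarrow> 'a set" where
  "Inv X V S = {x \<in> S. \<exists>\<gamma>. essential_in X V S \<gamma> \<and> \<gamma> 0 = x}"

definition invariant :: "'a topology \<Rightarrow> 'a set set \<Rightarrow> 'a set \<Rightarrow> bool" where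
  "invariant X V S \<longleftrightarrow> Inv X V S = S"

definition isolated_invariant :: "'a topology \<Rightarrow> 'a set set \<Rightarrow> 'a set \<Rightarrow> bool" where
  "isolated_invariant X V S \<longleftrightarrow> invariant X V S \<and>
     (\<exists>N. closedin X N \<and> (\<Union>x\<in>S. Pi_V X V x) \<subseteq> N \<and>
        (\<forall>a b \<gamma>. is_path X V a b \<gamma> \<and> \<gamma> ` {a..b} \<subseteq> N \<and> \<gamma> a \<in> S \<and> \<gamma> b \<in> S
            \<longrightarrow> \<gamma> ` {a..b} \<subseteq> S))"

definition is_link :: "'a topology \<Rightarrow> 'a set set \<Rightarrow> 'a set \<Rightarrow> 'a set \<Rightarrow> (int \<Rightarrow> 'a) \<Rightarrow> bool" where
  "is_link X V S1 S2 \<gamma> \<longleftrightarrow> full_solution X V \<gamma> \<and>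
     alpha_lim X V \<gamma> \<inter> S1 \<noteq> {} \<and> omega_lim X V \<gamma> \<inter> S2 \<noteq> {}"

definition morse_predecomposition ::
  "'a topology \<Rightarrow> 'a set set \<Rightarrow> 'p set \<Rightarrow> ('p \<Rightarrow> 'a set) \<Rightarrow> bool" where
  "morse_predecomposition X V P M \<longleftrightarrow>
     (\<forall>p\<in>P. \<forall>q\<in>P. p \<noteq> q \<longrightarrow> M p \<inter> M q = {}) \<and>
     (\<forall>p\<in>P. isolated_invariant X V (M p)) \<and>
     (\<forall>\<gamma>. essential_in X V (topspace X) \<gamma> \<longrightarrow>
        (\<exists>p\<in>P. \<exists>q\<in>P. is_link X V (M p) (M q) \<gamma>))"

definition G_edge :: "'a topology \<Rightarrow> 'a set set \<Rightarrow> ('p \<Rightarrow> 'a set) \<Rightarrow> 'p \<Rightarrow> 'p \<Rightarrow> bool" where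
  "G_edge X V M p q \<longleftrightarrow>
     (\<exists>\<gamma>. is_link X V (M p) (M q) \<gamma> \<and> \<not> (p = q \<and> range \<gamma> \<subseteq> M p))"

definition edges_within :: "('p \<Rightarrow> 'p \<Rightarrow> bool) \<Rightarrow> 'p set \<Rightarrow> ('p \<times> 'p) set" where
  "edges_within E A = {(v, w). v \<in> A \<and> w \<in> A \<and> E v w}"

definition strongly_connected :: "('p \<Rightarrow> 'p \<Rightarrow> bool) \<Rightarrow> 'p set \<Rightarrow> bool" where
  "strongly_connected E A \<longleftrightarrow> (\<forall>v\<in>A. \<forall>w\<in>A. (v, w) \<in> (edges_within E A)\<^sup>+)"

definition scc :: "('p \<Rightarrow> 'p \<Rightarrow> bool) \<Rightarrow> 'p set \<Rightarrow> 'p set \<Rightarrow> bool" where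
  "scc E P C \<longleftrightarrow> C \<subseteq> P \<and> strongly_connected E C \<and>
     (\<forall>D. C \<subseteq> D \<and> D \<subseteq> P \<and> strongly_connected E D \<longrightarrow> D = C)"

definition is_partition :: "'p set set \<Rightarrow> 'p set \<Rightarrow> bool" where
  "is_partition Q P \<longleftrightarrow> \<Union>Q = P \<and> {} \<notin> Q \<and> (\<forall>A\<in>Q. \<forall>B\<in>Q. A \<noteq> B \<longrightarrow> A \<inter> B = {})"

definition saturated :: "'a topology \<Rightarrow> 'a set set \<Rightarrow> 'a set \<Rightarrow> bool" where
  "saturated X V T \<longleftrightarrow> invariant X V T \<and>
     (\<forall>\<gamma>. essential_in X V (topspace X) \<gamma> \<and> alpha_lim X V \<gamma> \<union> omega_lim X V \<gamma> \<subseteq> T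
          \<longrightarrow> range \<gamma> \<subseteq> T)"

text \<open>Admissible preorder (as a relation R, (q,p) \<in> R meaning q \<le> p).\<close>
definition admissible_preorder ::
  "'a topology \<Rightarrow> 'a set set \<Rightarrow> 'p set \<Rightarrow> ('p \<Rightarrow> 'a set) \<Rightarrow> ('p \<times> 'p) set \<Rightarrow> bool" where
  "admissible_preorder X V P M R \<longleftrightarrow> R \<subseteq> P \<times> P \<and> refl_on P R \<and> trans R \<and>
     (\<forall>p\<in>P. \<forall>q\<in>P. (\<exists>\<gamma>. is_link X V (M p) (M q) \<gamma>) \<longrightarrow> (q, p) \<in> R)"

definition morse_decomposition ::
  "'a topology \<Rightarrow> 'a set set \<Rightarrow> 'p set \<Rightarrow> ('p \<Rightarrow> 'a set) \<Rightarrow> bool" where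
  "morse_decomposition X V P M \<longleftrightarrow> morse_predecomposition X V P M \<and>
     (\<forall>p\<in>P. saturated X V (M p)) \<and>
     (\<exists>R. admissible_preorder X V P M R \<and> antisym R)"

definition P_of :: "'p set \<Rightarrow> ('p \<Rightarrow> 'a set) \<Rightarrow> 'a set \<Rightarrow> 'p set" where
  "P_of P M C = {p \<in> P. M p \<inter> C \<noteq> {}}"

definition eSol :: "'a topology \<Rightarrow> 'a set set \<Rightarrow> 'p set \<Rightarrow> ('p \<Rightarrow> 'a set) \<Rightarrow> 'p set
    \<Rightarrow> (int \<Rightarrow> 'a) set" where
  "eSol X V P M Q = {\<gamma>. essential_in X V (topspace X) \<gamma> \<and>
      P_of P M (alpha_lim X V \<gamma>) \<inter> Q \<noteq> {} \<and> P_of P M (omega_lim X V \<gamma>) \<inter> Q \<noteq> {}}"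

definition M_union :: "'a topology \<Rightarrow> 'a set set \<Rightarrow> 'p set \<Rightarrow> ('p \<Rightarrow> 'a set) \<Rightarrow> 'p set \<Rightarrow> 'a set" where
  "M_union X V P M Q = \<Union>{range \<gamma> | \<gamma>. \<gamma> \<in> eSol X V P M Q}"

end

theory Submission
  imports Defs
begin

definition Step :: "'a topology \<Rightarrow> 'a set set \<Rightarrow> ('a \<times> 'a) set" where
  "Step X V = {(x, y). x \<in> topspace X \<and> y \<in> Pi_V X V x}"

definition btail :: "(int \<Rightarrow> 'a) \<Rightarrow> 'a set" where
  "btail \<gamma> = (\<Inter>t\<in>{..0}. \<gamma> ` {..t})"

definition ftail :: "(int \<Rightarrow> 'a) \<Rightarrow> 'a set" where
  "ftail \<gamma> = (\<Inter>t\<in>{0..}. \<gamma> ` {t..})"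

lemma alpha_eq: "alpha_lim X V \<gamma> = lc_hull X V (btail \<gamma>)"
  by (simp add: alpha_lim_def btail_def)

lemma omega_eq: "omega_lim X V \<gamma> = lc_hull X V (ftail \<gamma>)"
  by (simp add: omega_lim_def ftail_def)

lemma btail_iff: "x \<in> btail \<gamma> \<longleftrightarrow> (\<forall>t\<le>0. \<exists>s\<le>t. \<gamma> s = x)"
  unfolding btail_def by (auto simp: image_iff) 

lemma ftail_iff: "x \<in> ftail \<gamma> \<longleftrightarrow> (\<forall>t\<ge>0. \<exists>s\<ge>t. \<gamma> s = x)"
  unfolding ftail_def by (auto simp: image_iff)

lemma btail_shift:
  assumes "\<forall>s\<le>s0. \<gamma> s = \<gamma>' (s + c)"
  shows "btail \<gamma> = btail \<gamma>'"
proof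
  show "btail \<gamma> \<subseteq> btail \<gamma>'"
  proof
    fix x assume "x \<in> btail \<gamma>"
    hence h: "\<forall>t\<le>0. \<exists>s\<le>t. \<gamma> s = x" by (simp add: btail_iff)
    have "\<exists>s\<le>t. \<gamma>' s = x" if "t \<le> 0" for t
    proof -
      obtain s where "s \<le> min 0 (min s0 (t - c))" "\<gamma> s = x" using h by (meson min.cobounded1)
      thus ?thesis using assms by (intro exI[of _ "s + c"]) auto
    qed
    thus "x \<in> btail \<gamma>'" by (simp add: btail_iff)
  qed
next
  show "btail \<gamma>' \<subseteq> btail \<gamma>"
  proof
    fix x assume "x \<in> btail \<gamma>'"
    hence h: "\<forall>t\<le>0. \<exists>s\<le>t. \<gamma>' s = x" by (simp add: btail_iff)
    have "\<exists>s\<le>t. \<gamma> s = x" if "t \<le> 0" for t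
    proof -
      obtain s where "s \<le> min 0 (min (s0 + c) (t + c))" "\<gamma>' s = x" using h by (meson min.cobounded1)
      thus ?thesis using assms by (intro exI[of _ "s - c"]) auto
    qed
    thus "x \<in> btail \<gamma>" by (simp add: btail_iff)
  qed
qed

lemma ftail_shift:
  assumes "\<forall>s\<ge>s0. \<gamma> s = \<gamma>' (s + c)"
  shows "ftail \<gamma> = ftail \<gamma>'"
proof
  show "ftail \<gamma> \<subseteq> ftail \<gamma>'"
  proof
    fix x assume "x \<in> ftail \<gamma>"
    hence h: "\<forall>t\<ge>0. \<exists>s\<ge>t. \<gamma> s = x" by (simp add: ftail_iff)
    have "\<exists>s\<ge>t. \<gamma>' s = x" if "t \<ge> 0" for t
    proof -
      obtain s where "s \<ge> max 0 (max s0 (t - c))" "\<gamma> s = x" using h by (meson max.cobounded1)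
      thus ?thesis using assms by (intro exI[of _ "s + c"]) auto
    qed
    thus "x \<in> ftail \<gamma>'" by (simp add: ftail_iff)
  qed
next
  show "ftail \<gamma>' \<subseteq> ftail \<gamma>"
  proof
    fix x assume "x \<in> ftail \<gamma>'"
    hence h: "\<forall>t\<ge>0. \<exists>s\<ge>t. \<gamma>' s = x" by (simp add: ftail_iff)
    have "\<exists>s\<ge>t. \<gamma> s = x" if "t \<ge> 0" for t
    proof -
      obtain s where "s \<ge> max 0 (max (s0 + c) (t + c))" "\<gamma>' s = x" using h by (meson max.cobounded1)
      thus ?thesis using assms by (intro exI[of _ "s - c"]) auto
    qed
    thus "x \<in> ftail \<gamma>" by (simp add: ftail_iff)
  qed
qed

lemma btail_ne:
  assumes "finite (topspace X)" "\<forall>t. \<gamma> t \<in> topspace X"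
  shows "btail \<gamma> \<noteq> {}"
proof -
  have "(UNIV::nat set) = (\<Union>x\<in>topspace X. {n. \<gamma> (- int n) = x})" using assms(2) by auto
  hence "infinite (\<Union>x\<in>topspace X. {n::nat. \<gamma> (- int n) = x})" by (metis infinite_UNIV_nat)
  then obtain x where x: "x \<in> topspace X" "infinite {n::nat. \<gamma> (- int n) = x}"
    using assms(1) by blast
  have "\<exists>s\<le>t. \<gamma> s = x" if "t \<le> 0" for t
  proof -
    obtain n where "n \<ge> nat (- t)" "\<gamma> (- int n) = x"
      using x(2) unfolding infinite_nat_iff_unbounded_le by blast
    thus ?thesis using that by (intro exI[of _ "- int n"]) auto
  qed
  hence "x \<in> btail \<gamma>" by (simp add: btail_iff)
  thus ?thesis by blast
qed

lemma ftail_ne: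
  assumes "finite (topspace X)" "\<forall>t. \<gamma> t \<in> topspace X"
  shows "ftail \<gamma> \<noteq> {}"
proof -
  have "(UNIV::nat set) = (\<Union>x\<in>topspace X. {n. \<gamma> (int n) = x})" using assms(2) by auto
  hence "infinite (\<Union>x\<in>topspace X. {n::nat. \<gamma> (int n) = x})" by (metis infinite_UNIV_nat)
  then obtain x where x: "x \<in> topspace X" "infinite {n::nat. \<gamma> (int n) = x}"
    using assms(1) by blast
  have "\<exists>s\<ge>t. \<gamma> s = x" if "t \<ge> 0" for t
  proof -
    obtain n where "n \<ge> nat t" "\<gamma> (int n) = x"
      using x(2) unfolding infinite_nat_iff_unbounded_le by blast
    thus ?thesis using that by (intro exI[of _ "int n"]) auto
  qed
  hence "x \<in> ftail \<gamma>" by (simp add: ftail_iff)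
  thus ?thesis by blast
qed

lemma sub_lc_hull: "T \<subseteq> lc_hull X V T"
  unfolding lc_hull_def by blast

lemma btail_range: "btail \<gamma> \<subseteq> range \<gamma>"
  using btail_iff[of _ \<gamma>] by (metis order_refl rangeI subsetI)

lemma ftail_range: "ftail \<gamma> \<subseteq> range \<gamma>"
  using ftail_iff[of _ \<gamma>] by (metis order_refl rangeI subsetI)

lemma mv_eq:
  assumes "multivector_field X V" "A \<in> V" "x \<in> A"
  shows "mv V x = A"
  unfolding mv_def
proof (rule the_equality)
  show "A \<in> V \<and> x \<in> A" using assms by blast
  fix B assume "B \<in> V \<and> x \<in> B"
  thus "B = A" using assms unfolding multivector_field_def by blast
qed

lemma mv_in:
  assumes "multivector_field X V" "x \<in> topspace X"
  shows "mv V x \<in> V" "x \<in> mv V x"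
proof -
  obtain A where A: "A \<in> V" "x \<in> A" using assms unfolding multivector_field_def by blast
  thus "mv V x \<in> V" "x \<in> mv V x" using mv_eq[OF assms(1) A] by auto
qed

lemma mv_sub:
  assumes "multivector_field X V" "x \<in> topspace X"
  shows "mv V x \<subseteq> topspace X"
  using mv_in[OF assms] assms(1) unfolding multivector_field_def by blast

lemma Pi_V_sub:
  assumes "multivector_field X V" "x \<in> topspace X"
  shows "Pi_V X V x \<subseteq> topspace X"
  using mv_sub[OF assms] closure_of_subset_topspace[of X "{x}"] unfolding Pi_V_def by (rule Un_least[rotated])

lemma Step_top:
  assumes "multivector_field X V" "(x, y) \<in> Step X V"
  shows "x \<in> topspace X" "y \<in> topspace X"
  using assms Pi_V_sub[OF assms(1)] unfolding Step_def by auto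

lemma Step_rtop:
  assumes "multivector_field X V" "(x, y) \<in> (Step X V)\<^sup>*" "x \<in> topspace X"
  shows "y \<in> topspace X"
  using assms(2,3) by (induction rule: rtrancl_induct) (use Step_top[OF assms(1)] in auto)

lemma mv_Step:
  assumes "multivector_field X V" "x \<in> topspace X" "y \<in> mv V x"
  shows "(x, y) \<in> Step X V" "(y, x) \<in> Step X V"
proof -
  have y: "y \<in> topspace X" using mv_sub[OF assms(1,2)] assms(3) by blast
  have "mv V y = mv V x" using mv_eq[OF assms(1) mv_in(1)[OF assms(1,2)] assms(3)] .
  hence "x \<in> mv V y" using mv_in(2)[OF assms(1,2)] by simp
  thus "(x, y) \<in> Step X V" "(y, x) \<in> Step X V" using assms y unfolding Step_def Pi_V_def by auto
qed

lemma cl_Step: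
  assumes "x \<in> topspace X" "y \<in> X closure_of {x}"
  shows "(x, y) \<in> Step X V"
  using assms unfolding Step_def Pi_V_def by auto

lemma full_reach:
  assumes "full_solution X V \<gamma>" "s \<le> t"
  shows "(\<gamma> s, \<gamma> t) \<in> (Step X V)\<^sup>*"
proof -
  obtain n where n: "t = s + int n" using assms(2) by (metis zle_iff_zadd)
  have "(\<gamma> s, \<gamma> (s + int n)) \<in> (Step X V)\<^sup>*" for n
  proof (induction n)
    case 0 thus ?case by simp
  next
    case (Suc n)
    have "(\<gamma> (s + int n), \<gamma> (s + int n + 1)) \<in> Step X V"
      using assms(1) unfolding full_solution_def Step_def by auto
    moreover have "s + int (Suc n) = s + int n + 1" by simp
    ultimately show ?case using Suc by (metis rtrancl_into_rtrancl)
  qed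
  thus ?thesis using n by simp
qed

lemma path_reach:
  assumes "is_path X V a b \<gamma>" "a \<le> s" "s \<le> t" "t \<le> b"
  shows "(\<gamma> s, \<gamma> t) \<in> (Step X V)\<^sup>*"
proof -
  obtain n where n: "t = s + int n" using assms(3) by (metis zle_iff_zadd)
  have "s + int n \<le> b \<Longrightarrow> (\<gamma> s, \<gamma> (s + int n)) \<in> (Step X V)\<^sup>*" for n
  proof (induction n)
    case 0 thus ?case by simp
  next
    case (Suc n)
    have le: "s + int n \<le> b" "s + int n < b" using Suc.prems by auto
    have ih: "(\<gamma> s, \<gamma> (s + int n)) \<in> (Step X V)\<^sup>*" using Suc.IH le(1) by blast
    have i: "s + int n \<in> {a..<b}" "s + int n \<in> {a..b}" using le assms(2) by auto
    have "(\<gamma> (s + int n), \<gamma> (s + int n + 1)) \<in> Step X V"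
      using assms(1) i unfolding is_path_def Step_def by blast
    moreover have "s + int (Suc n) = s + int n + 1" by simp
    ultimately show ?case using ih by (metis rtrancl_into_rtrancl)
  qed
  thus ?thesis using n assms(4) by simp
qed

lemma glue:
  assumes inv: "\<forall>y\<in>topspace X. \<exists>\<eta>. full_solution X V \<eta> \<and> \<eta> 0 = y"
    and mvf: "multivector_field X V"
    and r: "(x, y) \<in> (Step X V)\<^sup>*"
    and f1: "full_solution X V \<gamma>1" and x: "\<gamma>1 t1 = x"
  shows "\<exists>\<gamma> k d. full_solution X V \<gamma> \<and> (\<forall>s\<le>d. \<gamma> s = \<gamma>1 (s + (t1 - d))) \<and> d \<le> k \<and> \<gamma> k = y"
  using r
proof (induction rule: rtrancl_induct)
  case base
  show ?case using f1 x by (intro exI[of _ \<gamma>1] exI[of _ t1]) auto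
next
  case (step y0 y)
  then obtain \<gamma> k d where g: "full_solution X V \<gamma>" "\<forall>s\<le>d. \<gamma> s = \<gamma>1 (s + (t1 - d))"
    "d \<le> k" "\<gamma> k = y0" by blast
  have yt: "y \<in> topspace X" using Step_top[OF mvf step(2)] by simp
  obtain \<eta> where eta: "full_solution X V \<eta>" "\<eta> 0 = y" using inv yt by blast
  define g2 where "g2 = (\<lambda>s. if s \<le> 0 then \<gamma> (s + k) else \<eta> (s - 1))"
  have "full_solution X V g2"
    unfolding full_solution_def
  proof (intro conjI allI)
    fix t
    show "g2 t \<in> topspace X" using g(1) eta(1) unfolding g2_def full_solution_def by auto
    show "g2 (t + 1) \<in> Pi_V X V (g2 t)"
    proof (cases "t < 0")
      case True
      thus ?thesis using g(1) unfolding g2_def full_solution_def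
        by (auto simp: algebra_simps)
    next
      case False
      show ?thesis
      proof (cases "t = 0")
        case True
        thus ?thesis using step(2) g(4) eta(2) unfolding g2_def Step_def by auto
      next
        case False
        hence "t > 0" using \<open>\<not> t < 0\<close> by simp
        thus ?thesis using eta(1) unfolding g2_def full_solution_def
          by auto (metis diff_add_cancel)
      qed
    qed
  qed
  moreover have "\<forall>s\<le>d - k. g2 s = \<gamma>1 (s + (t1 - (d - k)))"
    using g(2,3) unfolding g2_def by (auto simp: algebra_simps)
  moreover have "g2 1 = y" using eta unfolding g2_def by simp
  ultimately show ?case using g(3) by (intro exI[of _ g2] exI[of _ 1] exI[of _ "d - k"]) auto
qed

lemma join:
  assumes "full_solution X V \<gamma>" "full_solution X V \<gamma>2" "\<gamma> k = \<gamma>2 t2"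
  shows "full_solution X V (\<lambda>s. if s \<le> 0 then \<gamma> (s + k) else \<gamma>2 (s + t2))"
  unfolding full_solution_def
proof (intro conjI allI)
  fix t
  show "(if t \<le> 0 then \<gamma> (t + k) else \<gamma>2 (t + t2)) \<in> topspace X"
    using assms unfolding full_solution_def by auto
  show "(if t + 1 \<le> 0 then \<gamma> (t + 1 + k) else \<gamma>2 (t + 1 + t2))
        \<in> Pi_V X V (if t \<le> 0 then \<gamma> (t + k) else \<gamma>2 (t + t2))"
  proof (cases "t < 0")
    case True
    thus ?thesis using assms(1) unfolding full_solution_def
      by (auto simp: algebra_simps)
  next
    case False
    show ?thesis
    proof (cases "t = 0")
      case True
      thus ?thesis using assms(2,3) unfolding full_solution_def by (auto simp: algebra_simps)
    next
      case False
      thus ?thesis using \<open>\<not> t < 0\<close> assms(2) unfolding full_solution_def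
        by (auto simp: algebra_simps)
    qed
  qed
qed

lemma connect:
  assumes inv: "\<forall>y\<in>topspace X. \<exists>\<eta>. full_solution X V \<eta> \<and> \<eta> 0 = y"
    and mvf: "multivector_field X V"
    and f1: "full_solution X V \<gamma>1" and f2: "full_solution X V \<gamma>2"
    and r1: "(\<gamma>1 t1, y) \<in> (Step X V)\<^sup>*" and r2: "(y, \<gamma>2 t2) \<in> (Step X V)\<^sup>*"
  shows "\<exists>\<gamma>. full_solution X V \<gamma> \<and> btail \<gamma> = btail \<gamma>1 \<and> ftail \<gamma> = ftail \<gamma>2 \<and> y \<in> range \<gamma>"
proof -
  obtain e1 k1 d1 where e1: "full_solution X V e1" "\<forall>s\<le>d1. e1 s = \<gamma>1 (s + (t1 - d1))"
    "d1 \<le> k1" "e1 k1 = y"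
    using glue[OF inv mvf r1 f1 refl] by blast
  obtain e2 k2 d2 where e2: "full_solution X V e2" "\<forall>s\<le>d2. e2 s = e1 (s + (k1 - d2))"
    "d2 \<le> k2" "e2 k2 = \<gamma>2 t2"
    using glue[OF inv mvf _ e1(1), of y "\<gamma>2 t2" k1] r2 e1(4) by blast
  define e3 where "e3 = (\<lambda>s. if s \<le> 0 then e2 (s + k2) else \<gamma>2 (s + t2))"
  have f3: "full_solution X V e3" unfolding e3_def by (rule join[OF e2(1) f2 e2(4)])
  have "btail e3 = btail e2" by (rule btail_shift[of 0 _ _ k2]) (simp add: e3_def)
  also have "\<dots> = btail e1" by (rule btail_shift[OF e2(2)])
  also have "\<dots> = btail \<gamma>1" by (rule btail_shift[OF e1(2)])
  finally have b: "btail e3 = btail \<gamma>1" .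
  have fa: "ftail e3 = ftail \<gamma>2" by (rule ftail_shift[of 1 _ _ t2]) (simp add: e3_def)
  have "e3 (d2 - k2) = y" using e2(2,3) e1(4) unfolding e3_def by simp
  hence "y \<in> range e3" by (metis rangeI)
  thus ?thesis using f3 b fa by blast
qed

lemma closure_finite_pts:
  assumes "finite A"
  shows "X closure_of A = (\<Union>a\<in>A. X closure_of {a})"
proof -
  have "A = \<Union>((\<lambda>a. {a}) ` A)" by blast
  hence "X closure_of A = X closure_of (\<Union>((\<lambda>a. {a}) ` A))" by simp
  also have "\<dots> = (\<Union>S\<in>(\<lambda>a. {a}) ` A. X closure_of S)"
    using assms by (intro closure_of_Union) simp
  finally show ?thesis by simp
qed

lemma convex_lc:
  assumes fin: "finite (topspace X)" and sub: "A \<subseteq> topspace X"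
    and cvx: "\<And>a b c. a \<in> A \<Longrightarrow> c \<in> A \<Longrightarrow> a \<in> X closure_of {b} \<Longrightarrow> b \<in> X closure_of {c} \<Longrightarrow> b \<in> A"
  shows "locally_closed X A"
proof -
  have finA: "finite A" using fin sub finite_subset by blast
  let ?D = "X closure_of A - A"
  have eq: "?D = (\<Union>b\<in>?D. X closure_of {b})"
  proof
    show "?D \<subseteq> (\<Union>b\<in>?D. X closure_of {b})"
    proof
      fix b assume b: "b \<in> ?D"
      hence "b \<in> topspace X" using closure_of_subset_topspace[of X A] by blast
      hence "b \<in> X closure_of {b}" using closure_of_subset[of "{b}" X] by blast
      thus "b \<in> (\<Union>b\<in>?D. X closure_of {b})" using b by blast
    qed
  next
    show "(\<Union>b\<in>?D. X closure_of {b}) \<subseteq> ?D"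
    proof
      fix a assume "a \<in> (\<Union>b\<in>?D. X closure_of {b})"
      then obtain b where b: "b \<in> ?D" "a \<in> X closure_of {b}" by blast
      have "X closure_of {b} \<subseteq> X closure_of A"
        using b(1) by (intro closure_of_minimal) auto
      hence aA: "a \<in> X closure_of A" using b by blast
      obtain c where c: "c \<in> A" "b \<in> X closure_of {c}"
        using b(1) closure_finite_pts[OF finA, of X] by blast
      have "a \<notin> A" using cvx[of a c b] c b by blast
      thus "a \<in> ?D" using aA by blast
    qed
  qed
  have "finite ?D" using fin closure_of_subset_topspace[of X A] finite_subset by blast
  hence "closedin X (\<Union>b\<in>?D. X closure_of {b})" by (intro closedin_Union) auto
  thus ?thesis unfolding locally_closed_def using sub eq by simp
qed

lemma hull_reach:
  assumes fin: "finite (topspace X)" and mvf: "multivector_field X V"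
    and T: "T \<subseteq> topspace X" and y: "y \<in> lc_hull X V T"
  shows "(\<exists>t\<in>T. (y, t) \<in> (Step X V)\<^sup>*) \<and> (\<exists>t\<in>T. (t, y) \<in> (Step X V)\<^sup>*)"
proof -
  define H where "H = {y \<in> topspace X. (\<exists>t\<in>T. (y, t) \<in> (Step X V)\<^sup>*) \<and> (\<exists>t\<in>T. (t, y) \<in> (Step X V)\<^sup>*)}"
  have TH: "T \<subseteq> H" using T unfolding H_def by blast
  have lc: "locally_closed X H"
  proof (rule convex_lc[OF fin])
    show "H \<subseteq> topspace X" unfolding H_def by blast
    fix a b c assume a: "a \<in> H" and c: "c \<in> H" and ab: "a \<in> X closure_of {b}" and bc: "b \<in> X closure_of {c}"
    have ct: "c \<in> topspace X" using c unfolding H_def by blast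
    have bt: "b \<in> topspace X" using bc closure_of_subset_topspace[of X "{c}"] by blast
    have "(b, a) \<in> Step X V" using cl_Step[OF bt ab] .
    moreover have "(c, b) \<in> Step X V" using cl_Step[OF ct bc] .
    ultimately show "b \<in> H" using a c bt unfolding H_def
      by (blast intro: converse_rtrancl_into_rtrancl rtrancl_into_rtrancl)
  qed
  have cp: "compatible V H"
    unfolding compatible_def
  proof (intro exI[of _ "{B \<in> V. B \<subseteq> H}"] conjI)
    show "{B \<in> V. B \<subseteq> H} \<subseteq> V" by blast
    show "H = \<Union>{B \<in> V. B \<subseteq> H}"
    proof
      show "\<Union>{B \<in> V. B \<subseteq> H} \<subseteq> H" by blast
      show "H \<subseteq> \<Union>{B \<in> V. B \<subseteq> H}"
      proof
        fix x assume x: "x \<in> H"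
        hence xt: "x \<in> topspace X" unfolding H_def by blast
        have "mv V x \<subseteq> H"
        proof
          fix w assume w: "w \<in> mv V x"
          have "(x, w) \<in> Step X V" "(w, x) \<in> Step X V" using mv_Step[OF mvf xt w] by auto
          moreover have "w \<in> topspace X" using mv_sub[OF mvf xt] w by blast
          ultimately show "w \<in> H" using x unfolding H_def
            by (blast intro: converse_rtrancl_into_rtrancl rtrancl_into_rtrancl)
        qed
        thus "x \<in> \<Union>{B \<in> V. B \<subseteq> H}" using mv_in[OF mvf xt] by blast
      qed
    qed
  qed
  have "lc_hull X V T \<subseteq> H" unfolding lc_hull_def using lc cp TH by blast
  thus ?thesis using y unfolding H_def by blast
qed

lemma ew_mono: "A \<subseteq> B \<Longrightarrow> edges_within E A \<subseteq> edges_within E B"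
  unfolding edges_within_def by auto

lemma sc_sub:
  assumes "strongly_connected E A" "A \<subseteq> B" "v \<in> A" "w \<in> A"
  shows "(v, w) \<in> (edges_within E B)\<^sup>+"
  using assms trancl_mono[OF _ ew_mono[OF assms(2)]] unfolding strongly_connected_def by blast

lemma sc_merge:
  assumes s1: "scc E P Q1" and s2: "scc E P Q2"
    and "p1 \<in> Q1" "q2 \<in> Q2" "(p1, q2) \<in> (edges_within E P)\<^sup>*"
    and "p2 \<in> Q2" "q1 \<in> Q1" "(p2, q1) \<in> (edges_within E P)\<^sup>*"
  shows "Q2 \<subseteq> Q1"
proof -
  let ?Ep = "edges_within E P"
  define D where "D = {v \<in> P. (p1, v) \<in> ?Ep\<^sup>* \<and> (v, p1) \<in> ?Ep\<^sup>*}"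
  let ?ED = "edges_within E D"
  have sc1: "strongly_connected E Q1" "Q1 \<subseteq> P" using s1 unfolding scc_def by auto
  have sc2: "strongly_connected E Q2" "Q2 \<subseteq> P" using s2 unfolding scc_def by auto
  have Q1D: "Q1 \<subseteq> D"
  proof
    fix v assume v: "v \<in> Q1"
    have "(p1, v) \<in> ?Ep\<^sup>+" "(v, p1) \<in> ?Ep\<^sup>+" using sc_sub[OF sc1] v assms(3) by auto
    thus "v \<in> D" unfolding D_def using v sc1(2) by auto
  qed
  have Q2D: "Q2 \<subseteq> D"
  proof
    fix v assume v: "v \<in> Q2"
    have "(q2, v) \<in> ?Ep\<^sup>+" "(v, p2) \<in> ?Ep\<^sup>+" using sc_sub[OF sc2] v assms(4,6) by auto
    moreover have "(q1, p1) \<in> ?Ep\<^sup>+" using sc_sub[OF sc1] assms(3,7) by auto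
    ultimately have "(p1, v) \<in> ?Ep\<^sup>*" "(v, p1) \<in> ?Ep\<^sup>*" using assms(5,8)
      by (meson rtrancl_trans trancl_into_rtrancl)+
    thus "v \<in> D" unfolding D_def using v sc2(2) by auto
  qed
  have A: "(v, p1) \<in> ?ED\<^sup>*" if "(v, p1) \<in> ?Ep\<^sup>*" "(p1, v) \<in> ?Ep\<^sup>*" for v
    using that
  proof (induction rule: converse_rtrancl_induct)
    case base thus ?case by simp
  next
    case (step v v')
    have pv': "(p1, v') \<in> ?Ep\<^sup>*" using step(4) step(1) by (meson rtrancl.rtrancl_into_rtrancl)
    have vv: "v \<in> P" "v' \<in> P" "E v v'" using step(1) unfolding edges_within_def by auto
    have "(v, p1) \<in> ?Ep\<^sup>*" using step(1,2) by (meson converse_rtrancl_into_rtrancl)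
    hence "v \<in> D" "v' \<in> D" using vv step(2,4) pv' unfolding D_def by auto
    hence "(v, v') \<in> ?ED" using vv unfolding edges_within_def by auto
    thus ?case using step(3)[OF pv'] by (meson converse_rtrancl_into_rtrancl)
  qed
  have B: "(p1, w) \<in> ?ED\<^sup>*" if "(p1, w) \<in> ?Ep\<^sup>*" "(w, p1) \<in> ?Ep\<^sup>*" for w
    using that
  proof (induction rule: rtrancl_induct)
    case base thus ?case by simp
  next
    case (step w' w)
    have wp: "(w', p1) \<in> ?Ep\<^sup>*" using step(2,4) by (meson converse_rtrancl_into_rtrancl)
    have vv: "w' \<in> P" "w \<in> P" "E w' w" using step(2) unfolding edges_within_def by auto
    have "(p1, w) \<in> ?Ep\<^sup>*" using step(1,2) by (meson rtrancl.rtrancl_into_rtrancl)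
    hence "w' \<in> D" "w \<in> D" using vv step(1,4) wp unfolding D_def by auto
    hence "(w', w) \<in> ?ED" using vv unfolding edges_within_def by auto
    thus ?case using step(3)[OF wp] by (meson rtrancl.rtrancl_into_rtrancl)
  qed
  have C: "(p1, p1) \<in> ?ED\<^sup>+" using sc_sub[OF sc1(1) Q1D assms(3) assms(3)] .
  have "strongly_connected E D"
    unfolding strongly_connected_def
  proof (intro ballI)
    fix v w assume "v \<in> D" "w \<in> D"
    hence "(v, p1) \<in> ?ED\<^sup>*" "(p1, w) \<in> ?ED\<^sup>*" using A B unfolding D_def by auto
    thus "(v, w) \<in> ?ED\<^sup>+" using C by (meson rtrancl_trancl_trancl trancl_rtrancl_trancl)
  qed
  moreover have "D \<subseteq> P" unfolding D_def by blast
  ultimately have "D = Q1" using s1 Q1D unfolding scc_def by blast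
  thus ?thesis using Q2D by blast
qed

lemma inv_sol:
  assumes "invariant X V (topspace X)"
  shows "\<forall>y\<in>topspace X. \<exists>\<eta>. full_solution X V \<eta> \<and> \<eta> 0 = y"
  using assms unfolding invariant_def Inv_def essential_in_def essential_def by blast

lemma eSol_connect:
  assumes inv: "invariant X V (topspace X)" and mvf: "multivector_field X V"
    and d1: "\<delta>1 \<in> eSol X V P M A" and d2: "\<delta>2 \<in> eSol X V P M B"
    and r1: "(\<delta>1 t1, y) \<in> (Step X V)\<^sup>*" and r2: "(y, \<delta>2 t2) \<in> (Step X V)\<^sup>*"
  shows "\<exists>\<gamma>. essential X V \<gamma> \<and> alpha_lim X V \<gamma> = alpha_lim X V \<delta>1
     \<and> omega_lim X V \<gamma> = omega_lim X V \<delta>2 \<and> y \<in> range \<gamma>"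
proof -
  have e1: "essential X V \<delta>1" and e2: "essential X V \<delta>2"
    using d1 d2 unfolding eSol_def essential_in_def by auto
  have f1: "full_solution X V \<delta>1" and f2: "full_solution X V \<delta>2"
    using e1 e2 unfolding essential_def by auto
  obtain \<gamma> where g: "full_solution X V \<gamma>" "btail \<gamma> = btail \<delta>1" "ftail \<gamma> = ftail \<delta>2" "y \<in> range \<gamma>"
    using connect[OF inv_sol[OF inv] mvf f1 f2 r1 r2] by blast
  have a: "alpha_lim X V \<gamma> = alpha_lim X V \<delta>1" and o: "omega_lim X V \<gamma> = omega_lim X V \<delta>2"
    using g by (simp_all add: alpha_eq omega_eq)
  have "essential X V \<gamma>" using e1 e2 g(1) a o unfolding essential_def by simp
  thus ?thesis using a o g(4) by blast
qed

lemma MU_iff: "x \<in> M_union X V P M A \<longleftrightarrow> (\<exists>\<delta>\<in>eSol X V P M A. x \<in> range \<delta>)"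
  unfolding M_union_def by blast

lemma MQ_convex:
  assumes inv: "invariant X V (topspace X)" and mvf: "multivector_field X V"
    and x: "x \<in> M_union X V P M A" and z: "z \<in> M_union X V P M A"
    and r1: "(x, y) \<in> (Step X V)\<^sup>*" and r2: "(y, z) \<in> (Step X V)\<^sup>*"
  shows "y \<in> M_union X V P M A"
proof -
  obtain \<delta>1 t1 where d1: "\<delta>1 \<in> eSol X V P M A" "\<delta>1 t1 = x" using x unfolding MU_iff by blast
  obtain \<delta>2 t2 where d2: "\<delta>2 \<in> eSol X V P M A" "\<delta>2 t2 = z" using z unfolding MU_iff by blast
  obtain \<gamma> where g: "essential X V \<gamma>" "alpha_lim X V \<gamma> = alpha_lim X V \<delta>1"
     "omega_lim X V \<gamma> = omega_lim X V \<delta>2" "y \<in> range \<gamma>"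
    using eSol_connect[OF inv mvf d1(1) d2(1), of t1 y t2] d1 d2 r1 r2 by blast
  have "range \<gamma> \<subseteq> topspace X" using g(1) unfolding essential_def full_solution_def by auto
  hence "\<gamma> \<in> eSol X V P M A" using g d1(1) d2(1) unfolding eSol_def essential_in_def by auto
  thus ?thesis using g(4) unfolding MU_iff by blast
qed

lemma link_reach:
  assumes inv: "invariant X V (topspace X)" and mvf: "multivector_field X V"
    and d1: "\<delta>1 \<in> eSol X V P M A" and d2: "\<delta>2 \<in> eSol X V P M B"
    and r: "(\<delta>1 t1, \<delta>2 t2) \<in> (Step X V)\<^sup>*"
  shows "\<exists>p\<in>A. \<exists>q\<in>B. (p, q) \<in> (edges_within (G_edge X V M) P)\<^sup>*"
proof -
  obtain \<gamma> where g: "essential X V \<gamma>" "alpha_lim X V \<gamma> = alpha_lim X V \<delta>1"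
     "omega_lim X V \<gamma> = omega_lim X V \<delta>2"
    using eSol_connect[OF inv mvf d1 d2 rtrancl.rtrancl_refl r] by blast
  obtain p where p: "p \<in> A" "p \<in> P" "M p \<inter> alpha_lim X V \<delta>1 \<noteq> {}"
    using d1 unfolding eSol_def P_of_def by blast
  obtain q where q: "q \<in> B" "q \<in> P" "M q \<inter> omega_lim X V \<delta>2 \<noteq> {}"
    using d2 unfolding eSol_def P_of_def by blast
  have lk: "is_link X V (M p) (M q) \<gamma>" using g p q unfolding is_link_def essential_def by auto
  have "(p, q) \<in> (edges_within (G_edge X V M) P)\<^sup>*"
  proof (cases "p = q")
    case True thus ?thesis by simp
  next
    case False
    hence "G_edge X V M p q" using lk unfolding G_edge_def by blast
    hence "(p, q) \<in> edges_within (G_edge X V M) P" using p q unfolding edges_within_def by auto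
    thus ?thesis by blast
  qed
  thus ?thesis using p q by blast
qed

lemma disj_classes:
  assumes inv: "invariant X V (topspace X)" and mvf: "multivector_field X V"
    and Qd: "Q = {C. scc (G_edge X V M) P C}" and part: "is_partition Q P"
    and A: "A \<in> Q" and B: "B \<in> Q"
    and x: "x \<in> M_union X V P M A" "x \<in> M_union X V P M B"
  shows "A = B"
proof -
  obtain \<delta>1 t1 where d1: "\<delta>1 \<in> eSol X V P M A" "\<delta>1 t1 = x" using x(1) unfolding MU_iff by blast
  obtain \<delta>2 t2 where d2: "\<delta>2 \<in> eSol X V P M B" "\<delta>2 t2 = x" using x(2) unfolding MU_iff by blast
  obtain p1 q2 where 1: "p1 \<in> A" "q2 \<in> B" "(p1, q2) \<in> (edges_within (G_edge X V M) P)\<^sup>*"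
    using link_reach[OF inv mvf d1(1) d2(1), of t1 t2] d1 d2 by auto
  obtain p2 q1 where 2: "p2 \<in> B" "q1 \<in> A" "(p2, q1) \<in> (edges_within (G_edge X V M) P)\<^sup>*"
    using link_reach[OF inv mvf d2(1) d1(1), of t2 t1] d1 d2 by auto
  have sA: "scc (G_edge X V M) P A" using A Qd by simp
  have sB: "scc (G_edge X V M) P B" using B Qd by simp
  have "B \<subseteq> A" using sc_merge[OF sA sB 1 2] .
  hence "A \<inter> B \<noteq> {}" using 1(2) by blast
  moreover have "\<forall>A\<in>Q. \<forall>B\<in>Q. A \<noteq> B \<longrightarrow> A \<inter> B = {}" using part unfolding is_partition_def by blast
  ultimately show ?thesis using A B by blast
qed

lemma Mp_sub:
  assumes fin: "finite (topspace X)" and pd: "morse_predecomposition X V P M"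
    and AP: "A \<subseteq> P" and p: "p \<in> A"
  shows "M p \<subseteq> M_union X V P M A"
proof
  fix x assume x: "x \<in> M p"
  have pP: "p \<in> P" using p AP by blast
  have "isolated_invariant X V (M p)" using pd pP unfolding morse_predecomposition_def by simp
  hence "Inv X V (M p) = M p" unfolding isolated_invariant_def invariant_def by blast
  then obtain \<delta> where d: "essential_in X V (M p) \<delta>" "\<delta> 0 = x" using x unfolding Inv_def by blast
  have f: "full_solution X V \<delta>" and r: "range \<delta> \<subseteq> M p"
    using d unfolding essential_in_def essential_def by auto
  have top: "\<forall>t. \<delta> t \<in> topspace X" using f unfolding full_solution_def by blast
  have "btail \<delta> \<noteq> {}" "ftail \<delta> \<noteq> {}" using btail_ne[OF fin top] ftail_ne[OF fin top] by auto
  moreover have "btail \<delta> \<subseteq> M p \<inter> alpha_lim X V \<delta>" "ftail \<delta> \<subseteq> M p \<inter> omega_lim X V \<delta>"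
    using btail_range[of \<delta>] ftail_range[of \<delta>] r sub_lc_hull[of "btail \<delta>" X V] sub_lc_hull[of "ftail \<delta>" X V]
    by (auto simp: alpha_eq omega_eq)
  ultimately have "M p \<inter> alpha_lim X V \<delta> \<noteq> {}" "M p \<inter> omega_lim X V \<delta> \<noteq> {}" by blast+
  hence "p \<in> P_of P M (alpha_lim X V \<delta>) \<inter> A" "p \<in> P_of P M (omega_lim X V \<delta>) \<inter> A"
    using p pP unfolding P_of_def by auto
  moreover have "range \<delta> \<subseteq> topspace X" using top by blast
  ultimately have "\<delta> \<in> eSol X V P M A" using d unfolding eSol_def essential_in_def by auto
  thus "x \<in> M_union X V P M A" using d(2) unfolding MU_iff by blast
qed

theorem corollary4p14:
  fixes X :: "'a topology" and V :: "'a set set" and P :: "'p set" and M :: "'p \<Rightarrow> 'a set"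
    and Q :: "'p set set"
  assumes "finite (topspace X)" and "t0_space X"
    and "multivector_field X V"
    and "invariant X V (topspace X)"
    and "morse_predecomposition X V P M"
    and "Q = {C. scc (G_edge X V M) P C}"
    and "is_partition Q P"
  shows "morse_decomposition X V Q (M_union X V P M)"
proof -
  note fin = assms(1) and mvf = assms(3) and inv = assms(4) and pd = assms(5)
    and Qd = assms(6) and part = assms(7)
  define E where "E = G_edge X V M"
  define M' where "M' = M_union X V P M"
  let ?Ep = "edges_within E P"
  have sccQ: "scc E P A" if "A \<in> Q" for A using that Qd E_def by simp
  have QP: "A \<subseteq> P" if "A \<in> Q" for A using sccQ[OF that] unfolding scc_def by blast
  have cls: "\<exists>A\<in>Q. p \<in> A" if "p \<in> P" for p using part that unfolding is_partition_def by blast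
  have ne: "A \<noteq> {}" if "A \<in> Q" for A using part that unfolding is_partition_def by blast
  have pdisj: "A \<inter> B = {}" if "A \<in> Q" "B \<in> Q" "A \<noteq> B" for A B
    using part that unfolding is_partition_def by blast
  have disj: "A = B" if "A \<in> Q" "B \<in> Q" "x \<in> M' A" "x \<in> M' B" for A B x
    using disj_classes[OF inv mvf Qd part that(1,2)] that(3,4) unfolding M'_def by blast
  have Msub: "M p \<subseteq> M' A" if "A \<in> Q" "p \<in> A" for A p
    using Mp_sub[OF fin pd QP[OF that(1)] that(2)] unfolding M'_def .
  have rng: "range \<delta> \<subseteq> M' A" if "\<delta> \<in> eSol X V P M A" for \<delta> A
    using that unfolding M'_def M_union_def by blast
  have Stop: "M' A \<subseteq> topspace X" for A
    unfolding M'_def M_union_def eSol_def essential_in_def by blast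
  have cvx: "y \<in> M' A" if "x \<in> M' A" "z \<in> M' A" "(x, y) \<in> (Step X V)\<^sup>*" "(y, z) \<in> (Step X V)\<^sup>*" for x y z A
    using MQ_convex[OF inv mvf, of x P M A z y] that unfolding M'_def by blast
  have invA: "invariant X V (M' A)" for A
  proof -
    have "M' A \<subseteq> Inv X V (M' A)"
    proof
      fix x assume x: "x \<in> M' A"
      then obtain \<delta> t where d: "\<delta> \<in> eSol X V P M A" "\<delta> t = x" unfolding M'_def MU_iff by blast
      have e: "essential X V \<delta>" using d unfolding eSol_def essential_in_def by blast
      hence f: "full_solution X V \<delta>" unfolding essential_def by blast
      define \<delta>' where "\<delta>' = (\<lambda>s. \<delta> (s + t))"
      have f': "full_solution X V \<delta>'" using f unfolding full_solution_def \<delta>'_def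
        by (metis add.commute add.left_commute)
      have "btail \<delta>' = btail \<delta>" by (rule btail_shift[of 0 _ _ t]) (simp add: \<delta>'_def)
      moreover have "ftail \<delta>' = ftail \<delta>" by (rule ftail_shift[of 0 _ _ t]) (simp add: \<delta>'_def)
      ultimately have "essential X V \<delta>'" using e f' unfolding essential_def by (simp add: alpha_eq omega_eq)
      moreover have "range \<delta>' \<subseteq> M' A" using rng[OF d(1)] unfolding \<delta>'_def by auto
      moreover have "\<delta>' 0 = x" using d(2) unfolding \<delta>'_def by simp
      ultimately have "essential_in X V (M' A) \<delta>' \<and> \<delta>' 0 = x" unfolding essential_in_def by blast
      thus "x \<in> Inv X V (M' A)" using x unfolding Inv_def by blast
    qed
    moreover have "Inv X V (M' A) \<subseteq> M' A" unfolding Inv_def by blast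
    ultimately show ?thesis unfolding invariant_def by blast
  qed
  have iso: "isolated_invariant X V (M' A)" for A
    unfolding isolated_invariant_def
  proof (intro conjI exI[of _ "X closure_of M' A"])
    show "invariant X V (M' A)" by (rule invA)
    show "closedin X (X closure_of M' A)" by simp
    show "(\<Union>x\<in>M' A. Pi_V X V x) \<subseteq> X closure_of M' A"
    proof (rule UN_least)
      fix x assume x: "x \<in> M' A"
      have xt: "x \<in> topspace X" using x Stop by blast
      have "{x} \<subseteq> M' A" using x by blast
      hence "X closure_of {x} \<subseteq> X closure_of M' A" by (rule closure_of_mono)
      moreover have "mv V x \<subseteq> M' A"
      proof
        fix y assume y: "y \<in> mv V x"
        have "(x, y) \<in> Step X V" "(y, x) \<in> Step X V" using mv_Step[OF mvf xt y] by auto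
        thus "y \<in> M' A" using cvx[OF x x, of y] by blast
      qed
      moreover have "M' A \<subseteq> X closure_of M' A" using Stop[of A] by (rule closure_of_subset)
      ultimately show "Pi_V X V x \<subseteq> X closure_of M' A" unfolding Pi_V_def by blast
    qed
    show "\<forall>a b \<gamma>. is_path X V a b \<gamma> \<and> \<gamma> ` {a..b} \<subseteq> X closure_of M' A \<and> \<gamma> a \<in> M' A \<and> \<gamma> b \<in> M' A
        \<longrightarrow> \<gamma> ` {a..b} \<subseteq> M' A"
    proof (intro allI impI subsetI)
      fix a b \<gamma> y
      assume h: "is_path X V a b \<gamma> \<and> \<gamma> ` {a..b} \<subseteq> X closure_of M' A \<and> \<gamma> a \<in> M' A \<and> \<gamma> b \<in> M' A"
        and y: "y \<in> \<gamma> ` {a..b}"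
      from y obtain t where t: "t \<in> {a..b}" "y = \<gamma> t" by blast
      have p: "is_path X V a b \<gamma>" using h by blast
      have r1: "(\<gamma> a, \<gamma> t) \<in> (Step X V)\<^sup>*" using path_reach[OF p, of a t] t(1) by simp
      have r2: "(\<gamma> t, \<gamma> b) \<in> (Step X V)\<^sup>*" using path_reach[OF p, of t b] t(1) by simp
      have ab: "\<gamma> a \<in> M' A" "\<gamma> b \<in> M' A" using h by blast+
      show "y \<in> M' A" using cvx[OF ab r1 r2] t(2) by simp
    qed
  qed
  have links: "\<exists>A\<in>Q. \<exists>B\<in>Q. is_link X V (M' A) (M' B) \<gamma>" if es: "essential_in X V (topspace X) \<gamma>" for \<gamma>
  proof -
    have "\<exists>p\<in>P. \<exists>q\<in>P. is_link X V (M p) (M q) \<gamma>"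
      using pd es unfolding morse_predecomposition_def by simp
    then obtain p q where pq: "p \<in> P" "q \<in> P" "is_link X V (M p) (M q) \<gamma>" by blast
    obtain A B where AB: "A \<in> Q" "p \<in> A" "B \<in> Q" "q \<in> B" using cls pq(1,2) by blast
    have s1: "M p \<subseteq> M' A" "M q \<subseteq> M' B" using Msub[OF AB(1,2)] Msub[OF AB(3,4)] by auto
    have "full_solution X V \<gamma>" "alpha_lim X V \<gamma> \<inter> M p \<noteq> {}" "omega_lim X V \<gamma> \<inter> M q \<noteq> {}"
      using pq(3) unfolding is_link_def by auto
    hence "is_link X V (M' A) (M' B) \<gamma>" using s1 unfolding is_link_def by blast
    thus ?thesis using AB by blast
  qed
  have pre: "morse_predecomposition X V Q M'"
    unfolding morse_predecomposition_def
  proof (intro conjI)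
    show "\<forall>A\<in>Q. \<forall>B\<in>Q. A \<noteq> B \<longrightarrow> M' A \<inter> M' B = {}"
    proof (intro ballI impI)
      fix A B assume AB: "A \<in> Q" "B \<in> Q" "A \<noteq> B"
      show "M' A \<inter> M' B = {}"
      proof (rule ccontr)
        assume "M' A \<inter> M' B \<noteq> {}"
        then obtain x where "x \<in> M' A" "x \<in> M' B" by blast
        thus False using disj[OF AB(1,2)] AB(3) by blast
      qed
    qed
    show "\<forall>A\<in>Q. isolated_invariant X V (M' A)" using iso by blast
    show "\<forall>\<gamma>. essential_in X V (topspace X) \<gamma> \<longrightarrow> (\<exists>A\<in>Q. \<exists>B\<in>Q. is_link X V (M' A) (M' B) \<gamma>)"
      using links by blast
  qed
  have sat: "saturated X V (M' A)" if A: "A \<in> Q" for A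
    unfolding saturated_def
  proof (intro conjI allI impI)
    show "invariant X V (M' A)" by (rule invA)
    fix \<gamma> assume h: "essential_in X V (topspace X) \<gamma> \<and> alpha_lim X V \<gamma> \<union> omega_lim X V \<gamma> \<subseteq> M' A"
    have "\<exists>p\<in>P. \<exists>q\<in>P. is_link X V (M p) (M q) \<gamma>"
      using pd h unfolding morse_predecomposition_def by simp
    then obtain p q where pq: "p \<in> P" "q \<in> P" "is_link X V (M p) (M q) \<gamma>" by blast
    obtain Ap Bq where AB: "Ap \<in> Q" "p \<in> Ap" "Bq \<in> Q" "q \<in> Bq" using cls pq(1,2) by blast
    obtain x where x: "x \<in> alpha_lim X V \<gamma>" "x \<in> M p" using pq(3) unfolding is_link_def by blast
    obtain z where z: "z \<in> omega_lim X V \<gamma>" "z \<in> M q" using pq(3) unfolding is_link_def by blast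
    have "Ap = A" using disj[OF AB(1) A, of x] Msub[OF AB(1,2)] x h by blast
    moreover have "Bq = A" using disj[OF AB(3) A, of z] Msub[OF AB(3,4)] z h by blast
    ultimately have "p \<in> P_of P M (alpha_lim X V \<gamma>) \<inter> A" "q \<in> P_of P M (omega_lim X V \<gamma>) \<inter> A"
      using AB x z pq unfolding P_of_def by auto
    hence "\<gamma> \<in> eSol X V P M A" using h unfolding eSol_def by blast
    thus "range \<gamma> \<subseteq> M' A" by (rule rng)
  qed
  define R where "R = {(B, A). A \<in> Q \<and> B \<in> Q \<and> (\<exists>p\<in>A. \<exists>q\<in>B. (p, q) \<in> ?Ep\<^sup>*)}"
  have adm: "admissible_preorder X V Q M' R"
    unfolding admissible_preorder_def
  proof (intro conjI ballI impI)
    show "R \<subseteq> Q \<times> Q" unfolding R_def by auto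
    show "refl_on Q R" unfolding refl_on_def R_def using ne by blast
    show "trans R" unfolding trans_def
    proof (intro allI impI)
      fix x y z assume xy: "(x, y) \<in> R" and yz: "(y, z) \<in> R"
      obtain q1 p1 where 1: "p1 \<in> z" "q1 \<in> y" "(p1, q1) \<in> ?Ep\<^sup>*" "y \<in> Q" "z \<in> Q"
        using yz unfolding R_def by blast
      obtain q2 p2 where 2: "p2 \<in> y" "q2 \<in> x" "(p2, q2) \<in> ?Ep\<^sup>*" "x \<in> Q"
        using xy unfolding R_def by blast
      have "strongly_connected E y" using sccQ[OF 1(4)] unfolding scc_def by blast
      hence "(q1, p2) \<in> ?Ep\<^sup>+" using sc_sub[of E y P q1 p2] QP[OF 1(4)] 1(2) 2(1) by blast
      hence "(p1, q2) \<in> ?Ep\<^sup>*" using 1(3) 2(3) by (meson rtrancl_trans trancl_into_rtrancl)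
      thus "(x, z) \<in> R" using 1 2 unfolding R_def by blast
    qed
  next
    fix A B assume A: "A \<in> Q" and B: "B \<in> Q" and "\<exists>\<gamma>. is_link X V (M' A) (M' B) \<gamma>"
    then obtain \<gamma> where g: "is_link X V (M' A) (M' B) \<gamma>" by blast
    have f: "full_solution X V \<gamma>" using g unfolding is_link_def by blast
    have top: "\<forall>t. \<gamma> t \<in> topspace X" using f unfolding full_solution_def by blast
    obtain y where y: "y \<in> alpha_lim X V \<gamma>" "y \<in> M' A" using g unfolding is_link_def by blast
    obtain z where z: "z \<in> omega_lim X V \<gamma>" "z \<in> M' B" using g unfolding is_link_def by blast
    have bt: "btail \<gamma> \<subseteq> topspace X" "ftail \<gamma> \<subseteq> topspace X"
      using btail_range[of \<gamma>] ftail_range[of \<gamma>] top by auto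
    obtain u where u: "u \<in> btail \<gamma>" "(y, u) \<in> (Step X V)\<^sup>*"
      using hull_reach[OF fin mvf bt(1)] y(1) unfolding alpha_eq by blast
    obtain w where w: "w \<in> ftail \<gamma>" "(w, z) \<in> (Step X V)\<^sup>*"
      using hull_reach[OF fin mvf bt(2)] z(1) unfolding omega_eq by blast
    obtain s where s: "\<gamma> s = u" using u(1) btail_range[of \<gamma>] by (metis imageE subsetD)
    obtain s' where s': "s' \<ge> max s 0" "\<gamma> s' = w" using w(1) unfolding ftail_iff
      by (meson max.cobounded2)
    have "(u, w) \<in> (Step X V)\<^sup>*" using full_reach[OF f, of s s'] s s' by simp
    hence yz: "(y, z) \<in> (Step X V)\<^sup>*" using u(2) w(2) by (meson rtrancl_trans)
    obtain \<delta>1 t1 where d1: "\<delta>1 \<in> eSol X V P M A" "\<delta>1 t1 = y" using y(2) unfolding M'_def MU_iff by blast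
    obtain \<delta>2 t2 where d2: "\<delta>2 \<in> eSol X V P M B" "\<delta>2 t2 = z" using z(2) unfolding M'_def MU_iff by blast
    obtain p q where "p \<in> A" "q \<in> B" "(p, q) \<in> ?Ep\<^sup>*"
      using link_reach[OF inv mvf d1(1) d2(1), of t1 t2] d1(2) d2(2) yz unfolding E_def by blast
    thus "(B, A) \<in> R" using A B unfolding R_def by blast
  qed
  have anti: "antisym R" unfolding antisym_def
  proof (intro allI impI)
    fix x y assume xy: "(x, y) \<in> R" and yx: "(y, x) \<in> R"
    obtain p1 q1 where 1: "p1 \<in> y" "q1 \<in> x" "(p1, q1) \<in> ?Ep\<^sup>*" "x \<in> Q" "y \<in> Q"
      using xy unfolding R_def by blast
    obtain p2 q2 where 2: "p2 \<in> x" "q2 \<in> y" "(p2, q2) \<in> ?Ep\<^sup>*"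
      using yx unfolding R_def by blast
    have "x \<subseteq> y" using sc_merge[OF sccQ[OF 1(5)] sccQ[OF 1(4)] 1(1,2,3) 2] .
    hence "x \<inter> y \<noteq> {}" using 1(2) by blast
    thus "x = y" using pdisj 1(4,5) by blast
  qed
  have "morse_decomposition X V Q M'" unfolding morse_decomposition_def
    using pre sat adm anti by blast
  thus ?thesis unfolding M'_def .
qed

end
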